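(* Let $k\ge3$. Define the planar $2k$-terminal network $(G,c)$: non-terminal vertices $u_{i,j}$ for $1\le i,j\le k$ ($i$ the column, $j$ the row); terminals $v_1,\dots,v_k,h_1,\dots,h_k$, with $v_j$ adjacent only to $u_{1,j}$ and $h_i$ adjacent only to $u_{i,1}$; grid edges $u_{i,j}u_{i+1,j}$ ($1\le i\le k-1$, $1\le j\le k$) and $u_{i,j}u_{i,j+1}$ ($1\le i\le k$, $1\le j\le k-1$). Costs: every terminal edge costs $k^4$; each edge $u_{i,k}u_{i+1,k}$ and each edge $u_{k,j}u_{k,j+1}$ costs $k^4$; each edge $u_{i,j}u_{i+1,j}$ with $i,j\le k-1$ costs $1$; each edge $u_{i,j}u_{i,j+1}$ with $i,j\le k-1$ costs $1-\varepsilon_{i,j}$ where $\varepsilon_{i,j}=j/k^4$. For $1\le i,j\le k-1$ let $S_{i,j}=\{h_1,\dots,h_i,v_1,\dots,v_j\}$. Then for all $1\le i,j\le k-1$, the cut $(W,V(G)\setminus W)$ with $W=S_{i,j}\cup\{u_{\alpha,\beta}:1\le\alpha\le i,\,1\le\beta\le j\}$ is the unique minimum-cost $S_{i,j}$-separating cut of $(G,c)$, and its cost is $i+j-\sum_{\alpha=1}^{i}\varepsilon_{\alpha,j}$.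
   Context: The terminal set is $Q=\{v_1,\dots,v_k,h_1,\dots,h_k\}$. A cut $(W,V(G)\setminus W)$ is $S$-separating if $W\cap Q\in\{S,Q\setminus S\}$; its cost is the total cost of edges with exactly one endpoint in $W$. Unique means every other $S_{i,j}$-separating cut has strictly larger cost. *)

theory Defs
  imports Complex_Main
begin

text \<open>Vertices: U i j = u_{i,j} (i column, j row), Vt j = v_j, Ht i = h_i.\<close>
datatype vtx = U nat nat | Vt nat | Ht nat

definition verts :: "nat \<Rightarrow> vtx set" where
  "verts k = {U i j | i j. 1 \<le> i \<and> i \<le> k \<and> 1 \<le> j \<and> j \<le> k}
     \<union> {Vt j | j. 1 \<le> j \<and> j \<le> k} \<union> {Ht i | i. 1 \<le> i \<and> i \<le> k}"

definition terminals :: "nat \<Rightarrow> vtx set" where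
  "terminals k = {Vt j | j. 1 \<le> j \<and> j \<le> k} \<union> {Ht i | i. 1 \<le> i \<and> i \<le> k}"

text \<open>Each undirected edge is listed once, as an ordered pair.\<close>
definition edges :: "nat \<Rightarrow> (vtx \<times> vtx) set" where
  "edges k = {(Vt j, U 1 j) | j. 1 \<le> j \<and> j \<le> k}
     \<union> {(Ht i, U i 1) | i. 1 \<le> i \<and> i \<le> k}
     \<union> {(U i j, U (i+1) j) | i j. 1 \<le> i \<and> i \<le> k - 1 \<and> 1 \<le> j \<and> j \<le> k}
     \<union> {(U i j, U i (j+1)) | i j. 1 \<le> i \<and> i \<le> k \<and> 1 \<le> j \<and> j \<le> k - 1}"

definition eps :: "nat \<Rightarrow> nat \<Rightarrow> nat \<Rightarrow> real" where
  "eps k i j = real j / real k ^ 4"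

text \<open>Cost of an edge (only meaningful on members of edges k).\<close>
fun ecost :: "nat \<Rightarrow> vtx \<Rightarrow> vtx \<Rightarrow> real" where
  "ecost k (U i j) (U i' j') =
     (if i' = i + 1 \<and> j' = j then (if j = k then real k ^ 4 else 1)
      else if i' = i \<and> j' = j + 1 then (if i = k then real k ^ 4 else 1 - eps k i j)
      else 0)"
| "ecost k (Vt j) (U i' j') = real k ^ 4"
| "ecost k (Ht i) (U i' j') = real k ^ 4"
| "ecost k _ _ = 0"

definition cut_cost :: "nat \<Rightarrow> vtx set \<Rightarrow> real" where
  "cut_cost k W = (\<Sum>(a, b) \<in> {(a, b) \<in> edges k. (a \<in> W) \<noteq> (b \<in> W)}. ecost k a b)"

text \<open>W describes the cut (W, V(G) - W).\<close>
definition separating :: "nat \<Rightarrow> vtx set \<Rightarrow> vtx set \<Rightarrow> bool" where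
  "separating k S W \<longleftrightarrow> W \<subseteq> verts k \<and>
     (W \<inter> terminals k = S \<or> W \<inter> terminals k = terminals k - S)"

definition Sij :: "nat \<Rightarrow> nat \<Rightarrow> vtx set" where
  "Sij i j = {Ht a | a. 1 \<le> a \<and> a \<le> i} \<union> {Vt b | b. 1 \<le> b \<and> b \<le> j}"

end

theory Submission
  imports Defs
begin
definition cr :: "vtx set \<Rightarrow> vtx \<Rightarrow> vtx \<Rightarrow> real" where
  "cr Z x y = (if (x \<in> Z) = (y \<in> Z) then 0 else 1)"

lemma edges_eq: "k \<ge> 1 \<Longrightarrow> edges k = (\<lambda>b. (Vt b, U 1 b)) ` {1..k} \<union> (\<lambda>a. (Ht a, U a 1)) ` {1..k}
  \<union> (\<lambda>(a,b). (U a b, U (Suc a) b)) ` ({1..<k} \<times> {1..k})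
  \<union> (\<lambda>(a,b). (U a b, U a (Suc b))) ` ({1..k} \<times> {1..<k})"
  unfolding edges_def by (auto simp: image_iff) 

lemma cc1: "finite (edges k) \<Longrightarrow> cut_cost k Z = (\<Sum>e\<in>edges k. cr Z (fst e) (snd e) * ecost k (fst e) (snd e))"
proof -
  assume f: "finite (edges k)"
  have "{(a, b) \<in> edges k. (a \<in> Z) \<noteq> (b \<in> Z)} = {e \<in> edges k. (fst e \<in> Z) \<noteq> (snd e \<in> Z)}" by auto
  hence "cut_cost k Z = (\<Sum>e\<in>{e \<in> edges k. (fst e \<in> Z) \<noteq> (snd e \<in> Z)}. ecost k (fst e) (snd e))"
    unfolding cut_cost_def by (simp add: case_prod_beta')
  also have "\<dots> = (\<Sum>e\<in>edges k. if (fst e \<in> Z) \<noteq> (snd e \<in> Z) then ecost k (fst e) (snd e) else 0)"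
    using f by (rule sum.inter_filter)
  also have "\<dots> = (\<Sum>e\<in>edges k. cr Z (fst e) (snd e) * ecost k (fst e) (snd e))"
    by (rule sum.cong) (auto simp: cr_def)
  finally show ?thesis .
qed

lemma expand:
  assumes k: "k \<ge> 1"
  shows "cut_cost k Z = (\<Sum>b\<in>{1..k}. cr Z (Vt b) (U 1 b) * real k^4) + (\<Sum>a\<in>{1..k}. cr Z (Ht a) (U a 1) * real k^4)
    + (\<Sum>(a,b)\<in>{1..<k}\<times>{1..k}. cr Z (U a b) (U (Suc a) b) * (if b = k then real k^4 else 1))
    + (\<Sum>(a,b)\<in>{1..k}\<times>{1..<k}. cr Z (U a b) (U a (Suc b)) * (if a = k then real k^4 else 1 - eps k a b))"
proof -
  let ?f = "\<lambda>e. cr Z (fst e) (snd e) * ecost k (fst e) (snd e)"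
  let ?E1 = "(\<lambda>b. (Vt b, U 1 b)) ` {1..k}" and ?E2 = "(\<lambda>a. (Ht a, U a 1)) ` {1..k}"
  let ?E3 = "(\<lambda>(a,b). (U a b, U (Suc a) b)) ` ({1..<k} \<times> {1..k})"
  let ?E4 = "(\<lambda>(a,b). (U a b, U a (Suc b))) ` ({1..k} \<times> {1..<k})"
  have e: "edges k = ?E1 \<union> ?E2 \<union> ?E3 \<union> ?E4" using edges_eq[OF k] .
  have fin: "finite (edges k)" unfolding e by auto
  have "cut_cost k Z = sum ?f (?E1 \<union> ?E2 \<union> ?E3 \<union> ?E4)" using cc1[OF fin] e by simp
  also have "\<dots> = sum ?f (?E1 \<union> ?E2 \<union> ?E3) + sum ?f ?E4"
    by (rule sum.union_disjoint) auto
  also have "sum ?f (?E1 \<union> ?E2 \<union> ?E3) = sum ?f (?E1 \<union> ?E2) + sum ?f ?E3"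
    by (rule sum.union_disjoint) auto
  also have "sum ?f (?E1 \<union> ?E2) = sum ?f ?E1 + sum ?f ?E2"
    by (rule sum.union_disjoint) auto
  also have "sum ?f ?E1 = (\<Sum>b\<in>{1..k}. cr Z (Vt b) (U 1 b) * real k^4)"
    by (subst sum.reindex) (auto simp: inj_on_def)
  also have "sum ?f ?E2 = (\<Sum>a\<in>{1..k}. cr Z (Ht a) (U a 1) * real k^4)"
    by (subst sum.reindex) (auto simp: inj_on_def)
  also have "sum ?f ?E3 = (\<Sum>(a,b)\<in>{1..<k}\<times>{1..k}. cr Z (U a b) (U (Suc a) b) * (if b = k then real k^4 else 1))"
    by (subst sum.reindex) (auto simp: inj_on_def intro!: sum.cong)
  also have "sum ?f ?E4 = (\<Sum>(a,b)\<in>{1..k}\<times>{1..<k}. cr Z (U a b) (U a (Suc b)) * (if a = k then real k^4 else 1 - eps k a b))"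
    by (subst sum.reindex) (auto simp: inj_on_def intro!: sum.cong)
  finally show ?thesis .
qed

lemma chain_const:
  assumes "\<And>a. m \<le> a \<Longrightarrow> a < n \<Longrightarrow> P a = P (Suc a)" "m \<le> c" "c \<le> n"
  shows "P c = P m"
  using assms(2,3)
proof (induction c)
  case 0 thus ?case by simp
next
  case (Suc c)
  show ?case
  proof (cases "m = Suc c")
    case True thus ?thesis by simp
  next
    case False
    hence "m \<le> c" using Suc by simp
    thus ?thesis using Suc assms(1)[of c] by simp
  qed
qed

lemma chain_sum:
  assumes "m \<le> n"
  shows "(\<Sum>a\<in>{m..<n}. if P a = P (Suc a) then 0 else 1 :: real) \<ge> (if P m = P n then 0 else 1)"
  using assms
proof (induction n)
  case 0 thus ?case by simp
next
  case (Suc n)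
  show ?case
  proof (cases "m = Suc n")
    case True thus ?thesis by simp
  next
    case False
    hence mn: "m \<le> n" using Suc by simp
    have "(\<Sum>a\<in>{m..<Suc n}. if P a = P (Suc a) then 0 else 1 :: real)
       = (\<Sum>a\<in>{m..<n}. if P a = P (Suc a) then 0 else 1 :: real) + (if P n = P (Suc n) then 0 else 1)"
      using mn by simp
    thus ?thesis using Suc.IH[OF mn] by (auto split: if_splits)
  qed
qed

lemma sum_zero_const:
  assumes "(\<Sum>a\<in>{m..<n}. if P a = P (Suc a) then 0 else 1 :: real) = 0" "m \<le> c" "c \<le> n"
  shows "P c = P m"
proof (rule chain_const[of m n P c])
  fix a assume "m \<le> a" "a < n"
  with assms(1) show "P a = P (Suc a)"
    by (subst (asm) sum_nonneg_eq_0_iff) (auto split: if_splits)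
qed (use assms in auto)

definition KK :: "nat \<Rightarrow> real" where "KK k = real k ^ 4"
definition RR :: "nat \<Rightarrow> vtx set \<Rightarrow> nat \<Rightarrow> real" where
  "RR k Z b = (\<Sum>a\<in>{1..<k}. cr Z (U a b) (U (Suc a) b))"
definition CC :: "nat \<Rightarrow> vtx set \<Rightarrow> nat \<Rightarrow> real" where
  "CC k Z a = (\<Sum>b\<in>{1..<k}. cr Z (U a b) (U a (Suc b)))"
definition EE :: "nat \<Rightarrow> vtx set \<Rightarrow> nat \<Rightarrow> real" where
  "EE k Z a = (\<Sum>b\<in>{1..<k}. cr Z (U a b) (U a (Suc b)) * (real b / KK k))"

lemma light:
  assumes k: "k \<ge> 1"
    and t1: "\<And>b. b \<in> {1..k} \<Longrightarrow> cr Z (Vt b) (U 1 b) = 0"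
    and t2: "\<And>a. a \<in> {1..k} \<Longrightarrow> cr Z (Ht a) (U a 1) = 0"
    and t3: "\<And>a. a \<in> {1..<k} \<Longrightarrow> cr Z (U a k) (U (Suc a) k) = 0"
    and t4: "\<And>b. b \<in> {1..<k} \<Longrightarrow> cr Z (U k b) (U k (Suc b)) = 0"
  shows "cut_cost k Z = (\<Sum>b\<in>{1..<k}. RR k Z b) + (\<Sum>a\<in>{1..<k}. CC k Z a) - (\<Sum>a\<in>{1..<k}. EE k Z a)"
proof -
  have ins: "{1..k} = insert k {1..<k}" using k by auto
  have s3: "(\<Sum>(a,b)\<in>{1..<k}\<times>{1..k}. cr Z (U a b) (U (Suc a) b) * (if b = k then real k^4 else 1))
      = (\<Sum>b\<in>{1..<k}. RR k Z b)"
  proof -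
    have "(\<Sum>(a,b)\<in>{1..<k}\<times>{1..k}. cr Z (U a b) (U (Suc a) b) * (if b = k then real k^4 else 1))
       = (\<Sum>a\<in>{1..<k}. \<Sum>b\<in>{1..k}. cr Z (U a b) (U (Suc a) b) * (if b = k then real k^4 else 1))"
      by (rule sum.cartesian_product[symmetric])
    also have "\<dots> = (\<Sum>a\<in>{1..<k}. \<Sum>b\<in>{1..<k}. cr Z (U a b) (U (Suc a) b))"
    proof (rule sum.cong[OF refl])
      fix a assume a: "a \<in> {1..<k}"
      have "(\<Sum>b\<in>{1..k}. cr Z (U a b) (U (Suc a) b) * (if b = k then real k^4 else 1))
         = cr Z (U a k) (U (Suc a) k) * real k^4 + (\<Sum>b\<in>{1..<k}. cr Z (U a b) (U (Suc a) b) * (if b = k then real k^4 else 1))"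
        unfolding ins by (subst sum.insert) auto
      also have "\<dots> = (\<Sum>b\<in>{1..<k}. cr Z (U a b) (U (Suc a) b))"
        using t3[OF a] by simp
      finally show "(\<Sum>b\<in>{1..k}. cr Z (U a b) (U (Suc a) b) * (if b = k then real k^4 else 1)) = (\<Sum>b\<in>{1..<k}. cr Z (U a b) (U (Suc a) b))" .
    qed
    also have "\<dots> = (\<Sum>b\<in>{1..<k}. RR k Z b)"
      unfolding RR_def by (rule sum.swap)
    finally show ?thesis .
  qed
  have s4: "(\<Sum>(a,b)\<in>{1..k}\<times>{1..<k}. cr Z (U a b) (U a (Suc b)) * (if a = k then real k^4 else 1 - eps k a b))
      = (\<Sum>a\<in>{1..<k}. CC k Z a) - (\<Sum>a\<in>{1..<k}. EE k Z a)"
  proof -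
    have "(\<Sum>(a,b)\<in>{1..k}\<times>{1..<k}. cr Z (U a b) (U a (Suc b)) * (if a = k then real k^4 else 1 - eps k a b))
       = (\<Sum>a\<in>{1..k}. \<Sum>b\<in>{1..<k}. cr Z (U a b) (U a (Suc b)) * (if a = k then real k^4 else 1 - eps k a b))"
      by (rule sum.cartesian_product[symmetric])
    also have "\<dots> = (\<Sum>a\<in>{1..<k}. \<Sum>b\<in>{1..<k}. cr Z (U a b) (U a (Suc b)) * (1 - eps k a b))"
      unfolding ins by (subst sum.insert) (auto simp: t4 intro!: sum.cong)
    also have "\<dots> = (\<Sum>a\<in>{1..<k}. CC k Z a - EE k Z a)"
      unfolding CC_def EE_def eps_def KK_def
      by (rule sum.cong) (auto simp: sum_subtractf[symmetric] algebra_simps intro!: sum.cong)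
    also have "\<dots> = (\<Sum>a\<in>{1..<k}. CC k Z a) - (\<Sum>a\<in>{1..<k}. EE k Z a)"
      by (rule sum_subtractf)
    finally show ?thesis .
  qed
  show ?thesis
    unfolding expand[OF k] s3 s4 using t1 t2 by simp
qed

lemma cr_nonneg: "cr Z x y \<ge> 0" by (simp add: cr_def)
lemma cr_le1: "cr Z x y \<le> 1" by (simp add: cr_def)
lemma cr_Ints: "cr Z x y \<in> \<int>" by (simp add: cr_def)

lemma heavy:
  assumes k: "k \<ge> 1"
    and h: "(\<exists>b\<in>{1..k}. cr Z (Vt b) (U 1 b) \<noteq> 0) \<or> (\<exists>a\<in>{1..k}. cr Z (Ht a) (U a 1) \<noteq> 0)
      \<or> (\<exists>a\<in>{1..<k}. cr Z (U a k) (U (Suc a) k) \<noteq> 0) \<or> (\<exists>b\<in>{1..<k}. cr Z (U k b) (U k (Suc b)) \<noteq> 0)"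
  shows "cut_cost k Z \<ge> real k ^ 4"
proof -
  have one: "cr Z x y \<noteq> 0 \<Longrightarrow> cr Z x y = 1" for x y by (simp add: cr_def split: if_splits)
  let ?S1 = "(\<Sum>b\<in>{1..k}. cr Z (Vt b) (U 1 b) * real k^4)"
  let ?S2 = "(\<Sum>a\<in>{1..k}. cr Z (Ht a) (U a 1) * real k^4)"
  let ?f3 = "\<lambda>(a,b). cr Z (U a b) (U (Suc a) b) * (if b = k then real k^4 else (1::real))"
  let ?f4 = "\<lambda>(a,b). cr Z (U a b) (U a (Suc b)) * (if a = k then real k^4 else 1 - eps k a b)"
  let ?S3 = "sum ?f3 ({1..<k}\<times>{1..k})"
  let ?S4 = "sum ?f4 ({1..k}\<times>{1..<k})"
  have kK: "real b \<le> real k ^ 4" if "b \<le> k" for b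
  proof -
    have "real b \<le> real k" using that by simp
    also have "real k \<le> real k ^ 4" using k by (simp add: power_increasing[of 1 4 "real k", simplified])
    finally show ?thesis .
  qed
  have n1: "?S1 \<ge> 0" by (intro sum_nonneg) (simp add: cr_nonneg)
  have n2: "?S2 \<ge> 0" by (intro sum_nonneg) (simp add: cr_nonneg)
  have n3': "?f3 x \<ge> 0" for x by (cases x) (simp add: cr_nonneg)
  have n4': "?f4 x \<ge> 0" if "x \<in> {1..k}\<times>{1..<k}" for x
  proof (cases x)
    case (Pair a b)
    have "eps k a b \<le> 1" using kK[of b] that Pair k unfolding eps_def by (auto simp: divide_le_eq_1)
    thus ?thesis using Pair by (simp add: cr_nonneg)
  qed
  have n3: "?S3 \<ge> 0" using n3' by (intro sum_nonneg) auto
  have n4: "?S4 \<ge> 0" using n4' by (intro sum_nonneg) auto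
  have "?S1 \<ge> real k ^ 4 \<or> ?S2 \<ge> real k ^ 4 \<or> ?S3 \<ge> real k ^ 4 \<or> ?S4 \<ge> real k ^ 4"
  proof -
    { fix b assume b: "b \<in> {1..k}" "cr Z (Vt b) (U 1 b) \<noteq> 0"
      have "?S1 \<ge> cr Z (Vt b) (U 1 b) * real k^4"
        using b by (intro member_le_sum) (auto simp: cr_nonneg)
      hence "?S1 \<ge> real k ^ 4" using one[OF b(2)] by simp }
    moreover
    { fix a assume a: "a \<in> {1..k}" "cr Z (Ht a) (U a 1) \<noteq> 0"
      have "?S2 \<ge> cr Z (Ht a) (U a 1) * real k^4"
        using a by (intro member_le_sum) (auto simp: cr_nonneg)
      hence "?S2 \<ge> real k ^ 4" using one[OF a(2)] by simp }
    moreover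
    { fix a assume a: "a \<in> {1..<k}" "cr Z (U a k) (U (Suc a) k) \<noteq> 0"
      have "?S3 \<ge> ?f3 (a,k)"
        using a k n3' by (intro member_le_sum) auto
      hence "?S3 \<ge> real k ^ 4" using one[OF a(2)] by simp }
    moreover
    { fix b assume b: "b \<in> {1..<k}" "cr Z (U k b) (U k (Suc b)) \<noteq> 0"
      have "?S4 \<ge> ?f4 (k,b)"
        using b k n4' by (intro member_le_sum) auto
      hence "?S4 \<ge> real k ^ 4" using one[OF b(2)] by simp }
    ultimately show ?thesis using h by blast
  qed
  hence "?S1 + ?S2 + ?S3 + ?S4 \<ge> real k ^ 4" using n1 n2 n3 n4 by linarith
  thus ?thesis unfolding expand[OF k] by simp
qed

lemma split_ivl: "j < k \<Longrightarrow> {1..<k} = {1..j} \<union> {Suc j..<k}" by auto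

lemma main:
  fixes k i j :: nat and Z W :: "vtx set"
  assumes k3: "k \<ge> 3" and i1: "1 \<le> i" and ik: "i \<le> k - 1" and j1: "1 \<le> j" and jk: "j \<le> k - 1"
    and Wdef: "W = Sij i j \<union> {U \<alpha> \<beta> | \<alpha> \<beta>. 1 \<le> \<alpha> \<and> \<alpha> \<le> i \<and> 1 \<le> \<beta> \<and> \<beta> \<le> j}"
    and Zv: "Z \<subseteq> verts k" and Zt: "Z \<inter> terminals k = Sij i j"
  shows "cut_cost k Z \<ge> real i + real j - real i * real j / KK k
     \<and> (Z \<noteq> W \<longrightarrow> cut_cost k Z > real i + real j - real i * real j / KK k)"
proof -
  define K where "K = KK k"
  have k1: "k \<ge> 1" using k3 by simp
  have Kpos: "K > 0" using k1 unfolding K_def KK_def by simp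
  have Kge: "K \<ge> real k ^ 4" unfolding K_def KK_def by simp
  have ijK: "real i * real j / K \<ge> 0" using Kpos by simp
  have ik': "i < k" and jk': "j < k" using ik jk k1 by auto
  have Vt_iff: "Vt b \<in> Z \<longleftrightarrow> b \<le> j" if "b \<in> {1..k}" for b
  proof -
    have "Vt b \<in> terminals k" using that unfolding terminals_def by auto
    hence "Vt b \<in> Z \<longleftrightarrow> Vt b \<in> Sij i j" using Zt by blast
    thus ?thesis using that unfolding Sij_def by auto
  qed
  have Ht_iff: "Ht a \<in> Z \<longleftrightarrow> a \<le> i" if "a \<in> {1..k}" for a
  proof -
    have "Ht a \<in> terminals k" using that unfolding terminals_def by auto
    hence "Ht a \<in> Z \<longleftrightarrow> Ht a \<in> Sij i j" using Zt by blast
    thus ?thesis using that unfolding Sij_def by auto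
  qed
  have UZ: "U a b \<in> Z \<Longrightarrow> 1 \<le> a \<and> a \<le> k \<and> 1 \<le> b \<and> b \<le> k" for a b
    using Zv unfolding verts_def by auto
  have costW_le: "real i + real j - real i * real j / K \<le> real i + real j" using ijK by simp
  show ?thesis
  proof (cases "(\<exists>b\<in>{1..k}. cr Z (Vt b) (U 1 b) \<noteq> 0) \<or> (\<exists>a\<in>{1..k}. cr Z (Ht a) (U a 1) \<noteq> 0)
      \<or> (\<exists>a\<in>{1..<k}. cr Z (U a k) (U (Suc a) k) \<noteq> 0) \<or> (\<exists>b\<in>{1..<k}. cr Z (U k b) (U k (Suc b)) \<noteq> 0)")
    case True
    have "cut_cost k Z \<ge> real k ^ 4" by (rule heavy[OF k1 True])
    moreover have "real i + real j < real k ^ 4"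
    proof -
      have "real i + real j < 2 * real k" using ik' jk' by simp
      also have "2 * real k \<le> real k ^ 3 * real k"
      proof (rule mult_right_mono)
        have "(3::real) ^ 3 \<le> real k ^ 3" using k3 by (intro power_mono) auto
        thus "2 \<le> real k ^ 3" by simp
      qed simp
      also have "\<dots> = real k ^ 4" by (simp add: power_Suc2[symmetric] del: power_Suc)
      finally show ?thesis .
    qed
    ultimately show ?thesis using costW_le unfolding K_def by linarith
  next
    case False
    have t1: "\<And>b. b \<in> {1..k} \<Longrightarrow> cr Z (Vt b) (U 1 b) = 0"
      and t2: "\<And>a. a \<in> {1..k} \<Longrightarrow> cr Z (Ht a) (U a 1) = 0"
      and t3: "\<And>a. a \<in> {1..<k} \<Longrightarrow> cr Z (U a k) (U (Suc a) k) = 0"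
      and t4: "\<And>b. b \<in> {1..<k} \<Longrightarrow> cr Z (U k b) (U k (Suc b)) = 0"
      using False by blast+
    have cost: "cut_cost k Z = (\<Sum>b\<in>{1..<k}. RR k Z b) + (\<Sum>a\<in>{1..<k}. CC k Z a) - (\<Sum>a\<in>{1..<k}. EE k Z a)"
      by (rule light[OF k1 t1 t2 t3 t4])
    define SR where "SR = (\<Sum>b\<in>{1..<k}. RR k Z b)"
    define SC where "SC = (\<Sum>a\<in>{1..<k}. CC k Z a)"
    define SE where "SE = (\<Sum>a\<in>{1..<k}. EE k Z a)"
    have cost': "cut_cost k Z = SR + SC - SE" using cost unfolding SR_def SC_def SE_def .
    have X1: "U 1 b \<in> Z \<longleftrightarrow> b \<le> j" if "b \<in> {1..k}" for b
      using t1[OF that] Vt_iff[OF that] by (simp add: cr_def split: if_splits)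
    have Xa1: "U a 1 \<in> Z \<longleftrightarrow> a \<le> i" if "a \<in> {1..k}" for a
      using t2[OF that] Ht_iff[OF that] by (simp add: cr_def split: if_splits)
    have Xk: "U a k \<notin> Z" if "a \<in> {1..k}" for a
    proof -
      have "(U a k \<in> Z) = (U 1 k \<in> Z)"
      proof (rule chain_const[where P="\<lambda>a. U a k \<in> Z" and m=1 and n=k])
        fix a' :: nat assume "1 \<le> a'" "a' < k"
        with t3[of a'] show "(U a' k \<in> Z) = (U (Suc a') k \<in> Z)" by (simp add: cr_def split: if_splits)
      qed (use that in auto)
      thus ?thesis using X1[of k] k1 jk' by simp
    qed
    have kX: "U k b \<notin> Z" if "b \<in> {1..k}" for b
    proof -
      have "(U k b \<in> Z) = (U k 1 \<in> Z)"
      proof (rule chain_const[where P="\<lambda>b. U k b \<in> Z" and m=1 and n=k])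
        fix b' :: nat assume "1 \<le> b'" "b' < k"
        with t4[of b'] show "(U k b' \<in> Z) = (U k (Suc b') \<in> Z)" by (simp add: cr_def split: if_splits)
      qed (use that in auto)
      thus ?thesis using Xa1[of k] k1 ik' by simp
    qed
    have RR_nn: "RR k Z b \<ge> 0" for b unfolding RR_def by (intro sum_nonneg) (simp add: cr_nonneg)
    have CC_nn: "CC k Z a \<ge> 0" for a unfolding CC_def by (intro sum_nonneg) (simp add: cr_nonneg)
    have RR_ge: "RR k Z b \<ge> 1" if "b \<in> {1..j}" for b
    proof -
      have "RR k Z b \<ge> (if (U 1 b \<in> Z) = (U k b \<in> Z) then 0 else 1)"
        unfolding RR_def cr_def using chain_sum[where P="\<lambda>a. U a b \<in> Z" and m=1 and n=k] k1 by simp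
      thus ?thesis using X1[of b] kX[of b] that jk' by auto
    qed
    have CC_ge: "CC k Z a \<ge> 1" if "a \<in> {1..i}" for a
    proof -
      have "CC k Z a \<ge> (if (U a 1 \<in> Z) = (U a k \<in> Z) then 0 else 1)"
        unfolding CC_def cr_def using chain_sum[where P="\<lambda>b. U a b \<in> Z" and m=1 and n=k] k1 by simp
      thus ?thesis using Xa1[of a] Xk[of a] that ik' by auto
    qed
    define q where "q = (real k - 1) / K"
    have q_nn: "q \<ge> 0" using Kpos k1 unfolding q_def by simp
    have EE_le: "EE k Z a \<le> q * CC k Z a" for a
    proof -
      have "EE k Z a \<le> (\<Sum>b\<in>{1..<k}. cr Z (U a b) (U a (Suc b)) * q)"
        unfolding EE_def K_def[symmetric]
      proof (rule sum_mono)
        fix b assume b: "b \<in> {1..<k}"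
        have "real b / K \<le> q" unfolding q_def using b Kpos by (auto simp: divide_right_mono)
        thus "cr Z (U a b) (U a (Suc b)) * (real b / K) \<le> cr Z (U a b) (U a (Suc b)) * q"
          by (intro mult_left_mono) (auto simp: cr_nonneg)
      qed
      also have "\<dots> = q * CC k Z a" unfolding CC_def by (simp add: sum_distrib_left mult.commute)
      finally show ?thesis .
    qed
    have SR_ge: "SR \<ge> real j"
    proof -
      have "real j = (\<Sum>b\<in>{1..j}. (1::real))" by simp
      also have "\<dots> \<le> (\<Sum>b\<in>{1..j}. RR k Z b)" by (rule sum_mono) (rule RR_ge)
      also have "\<dots> \<le> SR" unfolding SR_def using jk' by (intro sum_mono2) (auto simp: RR_nn)
      finally show ?thesis .
    qed
    have SC_ge: "SC \<ge> real i"
    proof -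
      have "real i = (\<Sum>b\<in>{1..i}. (1::real))" by simp
      also have "\<dots> \<le> (\<Sum>a\<in>{1..i}. CC k Z a)" by (rule sum_mono) (rule CC_ge)
      also have "\<dots> \<le> SC" unfolding SC_def using ik' by (intro sum_mono2) (auto simp: CC_nn)
      finally show ?thesis .
    qed
    have SE_le: "SE \<le> q * SC" unfolding SE_def SC_def sum_distrib_left by (rule sum_mono) (rule EE_le)
    have Ints: "SR + SC \<in> \<int>" unfolding SR_def SC_def RR_def CC_def
      by (intro Ints_add Ints_sum cr_Ints)
    show ?thesis
    proof (cases "SR + SC = real i + real j")
      case False
      have "SR + SC - (real i + real j) \<in> \<int>" using Ints by simp
      hence "1 \<le> \<bar>SR + SC - (real i + real j)\<bar>" by (rule Ints_nonzero_abs_ge1) (use False in simp)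
      hence ge: "SR + SC \<ge> real i + real j + 1" using SR_ge SC_ge by linarith
      have q1: "(real i + real j + 1) * q < 1"
      proof -
        have "(real i + real j + 1) * (real k - 1) < real k ^ 4"
        proof -
          have "(real i + real j + 1) * (real k - 1) \<le> (2 * real k) * real k"
            using ik' jk' k1 by (intro mult_mono) auto
          also have "\<dots> < real k ^ 3 * real k"
          proof (rule mult_strict_right_mono)
            have "real k ^ 3 = (real k * real k) * real k" by (simp add: power3_eq_cube)
            moreover have "real k * real k \<ge> 3 * 3" using k3 by (intro mult_mono) auto
            hence "(real k * real k) * real k \<ge> 9 * real k" by (intro mult_right_mono) auto
            moreover have "9 * real k > 2 * real k" using k1 by simp
            ultimately show "2 * real k < real k ^ 3" by linarith
          qed (use k1 in simp)
          also have "\<dots> = real k ^ 4" by (simp add: power_Suc2[symmetric] del: power_Suc)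
          finally show ?thesis .
        qed
        thus ?thesis unfolding q_def K_def KK_def using k1 by (simp add: field_simps)
      qed
      have "cut_cost k Z \<ge> (SR + SC) * (1 - q)"
      proof -
        have "SR * q \<ge> 0" using SR_ge q_nn by simp
        thus ?thesis using cost' SE_le by (simp add: algebra_simps)
      qed
      moreover have "(SR + SC) * (1 - q) \<ge> (real i + real j + 1) * (1 - q)"
      proof (rule mult_right_mono)
        have "q * (real i + real j) \<ge> 0" using q_nn by simp
        thus "0 \<le> 1 - q" using q1 by (simp add: algebra_simps)
      qed (use ge in simp)
      moreover have "(real i + real j + 1) * (1 - q) > real i + real j" using q1 by (simp add: algebra_simps)
      ultimately have "cut_cost k Z > real i + real j" by linarith
      thus ?thesis using costW_le unfolding K_def by linarith
    next
      case True
      hence SRj: "SR = real j" and SCi: "SC = real i" using SR_ge SC_ge by linarith+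
      have dj: "{1..j} \<inter> {Suc j..<k} = {}" and di: "{1..i} \<inter> {Suc i..<k} = {}" by auto
      have SRsplit: "SR = (\<Sum>b\<in>{1..j}. RR k Z b) + (\<Sum>b\<in>{Suc j..<k}. RR k Z b)"
        unfolding SR_def split_ivl[OF jk'] by (rule sum.union_disjoint) auto
      have SCsplit: "SC = (\<Sum>a\<in>{1..i}. CC k Z a) + (\<Sum>a\<in>{Suc i..<k}. CC k Z a)"
        unfolding SC_def split_ivl[OF ik'] by (rule sum.union_disjoint) auto
      have R1: "(\<Sum>b\<in>{1..j}. RR k Z b) \<ge> real j"
      proof -
        have "real j = (\<Sum>b\<in>{1..j}. (1::real))" by simp
        also have "\<dots> \<le> (\<Sum>b\<in>{1..j}. RR k Z b)" by (rule sum_mono) (rule RR_ge)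
        finally show ?thesis .
      qed
      have C1: "(\<Sum>a\<in>{1..i}. CC k Z a) \<ge> real i"
      proof -
        have "real i = (\<Sum>a\<in>{1..i}. (1::real))" by simp
        also have "\<dots> \<le> (\<Sum>a\<in>{1..i}. CC k Z a)" by (rule sum_mono) (rule CC_ge)
        finally show ?thesis .
      qed
      have R2: "(\<Sum>b\<in>{Suc j..<k}. RR k Z b) \<ge> 0" by (intro sum_nonneg RR_nn)
      have C2: "(\<Sum>a\<in>{Suc i..<k}. CC k Z a) \<ge> 0" by (intro sum_nonneg CC_nn)
      have Rz: "RR k Z b = 0" if "b \<in> {Suc j..<k}" for b
      proof -
        have "(\<Sum>b\<in>{Suc j..<k}. RR k Z b) = 0" using SRsplit SRj R1 R2 by linarith
        thus ?thesis using that by (subst (asm) sum_nonneg_eq_0_iff) (auto simp: RR_nn)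
      qed
      have Cz: "CC k Z a = 0" if "a \<in> {Suc i..<k}" for a
      proof -
        have "(\<Sum>a\<in>{Suc i..<k}. CC k Z a) = 0" using SCsplit SCi C1 C2 by linarith
        thus ?thesis using that by (subst (asm) sum_nonneg_eq_0_iff) (auto simp: CC_nn)
      qed
      have Ci: "(\<Sum>a\<in>{1..i}. CC k Z a) = real i" using SCsplit SCi C1 C2 by linarith
      have Cle1: "CC k Z a \<le> 1" if a: "a \<in> {1..i}" for a
      proof -
        have "(\<Sum>a\<in>{1..i}. CC k Z a) = CC k Z a + (\<Sum>a\<in>{1..i} - {a}. CC k Z a)"
          using a by (intro sum.remove) auto
        moreover have "(\<Sum>a\<in>{1..i} - {a}. CC k Z a) \<ge> (\<Sum>a\<in>{1..i} - {a}. (1::real))"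
          by (rule sum_mono) (rule CC_ge, auto)
        moreover have "(\<Sum>a\<in>{1..i} - {a}. (1::real)) = real i - 1"
          using a by (simp add: card_Diff_singleton of_nat_diff)
        ultimately show ?thesis using Ci by linarith
      qed
      have rowF: "U a b \<notin> Z" if b: "b \<in> {Suc j..k}" and a: "a \<in> {1..k}" for a b
      proof (cases "b = k")
        case True thus ?thesis using Xk a by simp
      next
        case False
        hence "RR k Z b = 0" using Rz b by auto
        hence "(U a b \<in> Z) = (U 1 b \<in> Z)"
          using sum_zero_const[where P="\<lambda>a. U a b \<in> Z" and m=1 and n=k and c=a] a
          unfolding RR_def cr_def by simp
        thus ?thesis using X1[of b] b by auto
      qed
      have colF: "U a b \<notin> Z" if a: "a \<in> {Suc i..k}" and b: "b \<in> {1..k}" for a b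
      proof (cases "a = k")
        case True thus ?thesis using kX b by simp
      next
        case False
        hence "CC k Z a = 0" using Cz a by auto
        hence "(U a b \<in> Z) = (U a 1 \<in> Z)"
          using sum_zero_const[where P="\<lambda>b. U a b \<in> Z" and m=1 and n=k and c=b] b
          unfolding CC_def cr_def by simp
        thus ?thesis using Xa1[of a] a by auto
      qed
      have inbox: "1 \<le> a \<and> a \<le> i \<and> 1 \<le> b \<and> b \<le> j" if h: "U a b \<in> Z" for a b
      proof -
        have bds: "1 \<le> a" "a \<le> k" "1 \<le> b" "b \<le> k" using UZ[OF h] by auto
        have "a \<le> i"
        proof (rule ccontr)
          assume "\<not> a \<le> i"
          hence "a \<in> {Suc i..k}" "b \<in> {1..k}" using bds by auto
          thus False using colF h by blast
        qed
        moreover have "b \<le> j"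
        proof (rule ccontr)
          assume "\<not> b \<le> j"
          hence "b \<in> {Suc j..k}" "a \<in> {1..k}" using bds by auto
          thus False using rowF h by blast
        qed
        ultimately show ?thesis using bds by simp
      qed
      define g where "g a = (if a \<le> i then real j / K else 0)" for a
      have crz: "cr Z (U a b) (U a (Suc b)) = 0" if "b \<ge> Suc j" for a b
      proof -
        have n1: "U a b \<notin> Z" using inbox[of a b] that by linarith
        have n2: "U a (Suc b) \<notin> Z" using inbox[of a "Suc b"] that by linarith
        show ?thesis by (simp add: cr_def n1 n2)
      qed
      have EEg: "EE k Z a \<le> g a" if a: "a \<in> {1..<k}" for a
      proof (cases "a \<le> i")
        case False
        hence "CC k Z a = 0" using Cz a by auto
        thus ?thesis using EE_le[of a] False unfolding g_def by simp
      next
        case True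
        have "EE k Z a \<le> (\<Sum>b\<in>{1..<k}. cr Z (U a b) (U a (Suc b)) * (real j / K))"
          unfolding EE_def K_def[symmetric]
        proof (rule sum_mono)
          fix b assume b: "b \<in> {1..<k}"
          show "cr Z (U a b) (U a (Suc b)) * (real b / K) \<le> cr Z (U a b) (U a (Suc b)) * (real j / K)"
          proof (cases "b \<le> j")
            case True thus ?thesis using Kpos by (intro mult_left_mono) (auto simp: cr_nonneg divide_right_mono)
          next
            case False thus ?thesis using crz[of b a] by simp
          qed
        qed
        also have "\<dots> = CC k Z a * (real j / K)" unfolding CC_def by (simp only: sum_distrib_right)
        also have "\<dots> \<le> real j / K" using Cle1[of a] True a Kpos
          by (intro mult_left_le_one_le) (auto simp: CC_nn)
        finally show ?thesis unfolding g_def using True by simp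
      qed
      have sumg: "(\<Sum>a\<in>{1..<k}. g a) = real i * real j / K"
      proof -
        have "(\<Sum>a\<in>{1..<k}. g a) = (\<Sum>a\<in>{a\<in>{1..<k}. a \<le> i}. real j / K)"
          unfolding g_def by (rule sum.inter_filter[symmetric]) simp
        also have "{a\<in>{1..<k}. a \<le> i} = {1..i}" using ik' by auto
        finally show ?thesis by simp
      qed
      have SEg: "SE \<le> real i * real j / K" unfolding SE_def sumg[symmetric] by (rule sum_mono) (rule EEg)
      have ge1: "cut_cost k Z \<ge> real i + real j - real i * real j / K"
        using cost' SRj SCi SEg by linarith
      have gt1: "cut_cost k Z > real i + real j - real i * real j / K" if ZW: "Z \<noteq> W"
      proof -
        have St: "Sij i j \<subseteq> terminals k" unfolding Sij_def terminals_def using ik' jk' by auto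
        have Bt: "{U \<alpha> \<beta> | \<alpha> \<beta>. 1 \<le> \<alpha> \<and> \<alpha> \<le> i \<and> 1 \<le> \<beta> \<and> \<beta> \<le> j} \<inter> terminals k = {}"
          unfolding terminals_def by auto
        have WT: "W \<inter> terminals k = Sij i j" unfolding Wdef using St Bt by blast
        have Tv: "terminals k \<subseteq> verts k" unfolding terminals_def verts_def by auto
        have Bv: "{U \<alpha> \<beta> | \<alpha> \<beta>. 1 \<le> \<alpha> \<and> \<alpha> \<le> i \<and> 1 \<le> \<beta> \<and> \<beta> \<le> j} \<subseteq> verts k"
          unfolding verts_def using ik' jk' by auto
        have Wv: "W \<subseteq> verts k" unfolding Wdef using St Tv Bv by blast
        obtain x where x: "(x \<in> Z) \<noteq> (x \<in> W)" using ZW by blast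
        have xv: "x \<in> verts k" using x Zv Wv by blast
        have xt: "x \<notin> terminals k" using x Zt WT by blast
        obtain \<alpha> \<beta> where xe: "x = U \<alpha> \<beta>" and ab: "1 \<le> \<alpha>" "\<alpha> \<le> k" "1 \<le> \<beta>" "\<beta> \<le> k"
        proof -
          have "\<exists>\<alpha> \<beta>. x = U \<alpha> \<beta> \<and> 1 \<le> \<alpha> \<and> \<alpha> \<le> k \<and> 1 \<le> \<beta> \<and> \<beta> \<le> k"
            using xv xt unfolding verts_def terminals_def by (cases x) auto
          thus ?thesis using that by blast
        qed
        have nZ: "U \<alpha> \<beta> \<notin> Z" and inW: "U \<alpha> \<beta> \<in> W"
        proof -
          have "U \<alpha> \<beta> \<in> Z \<Longrightarrow> U \<alpha> \<beta> \<in> W" using inbox[of \<alpha> \<beta>] unfolding Wdef by auto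
          thus "U \<alpha> \<beta> \<notin> Z" "U \<alpha> \<beta> \<in> W" using x xe by auto
        qed
        hence ai: "\<alpha> \<le> i" and bj: "\<beta> \<le> j" unfolding Wdef Sij_def by auto
        have a1: "U \<alpha> 1 \<in> Z" using Xa1[of \<alpha>] ab ai by auto
        have b2: "\<beta> \<ge> 2" using a1 nZ ab by (cases "\<beta> = 1") auto
        have bk: "\<beta> < k" using bj jk' by simp
        have Csplit: "CC k Z \<alpha> = (\<Sum>b\<in>{1..<\<beta>}. cr Z (U \<alpha> b) (U \<alpha> (Suc b))) + (\<Sum>b\<in>{\<beta>..<k}. cr Z (U \<alpha> b) (U \<alpha> (Suc b)))"
        proof -
          have "{1..<k} = {1..<\<beta>} \<union> {\<beta>..<k}" using bk ab by auto
          thus ?thesis unfolding CC_def by (simp add: sum.union_disjoint)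
        qed
        have C1b: "(\<Sum>b\<in>{1..<\<beta>}. cr Z (U \<alpha> b) (U \<alpha> (Suc b))) \<ge> 1"
          using chain_sum[where P="\<lambda>b. U \<alpha> b \<in> Z" and m=1 and n=\<beta>] ab a1 nZ unfolding cr_def by auto
        have C2b: "(\<Sum>b\<in>{\<beta>..<k}. cr Z (U \<alpha> b) (U \<alpha> (Suc b))) = 0"
        proof -
          have "(\<Sum>b\<in>{\<beta>..<k}. cr Z (U \<alpha> b) (U \<alpha> (Suc b))) \<ge> 0" by (intro sum_nonneg cr_nonneg)
          thus ?thesis using Csplit C1b Cle1[of \<alpha>] ab ai by auto
        qed
        have crz2: "cr Z (U \<alpha> b) (U \<alpha> (Suc b)) = 0" if "b \<in> {\<beta>..<k}" for b
          using C2b that by (subst (asm) sum_nonneg_eq_0_iff) (auto simp: cr_nonneg)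
        have Ea: "EE k Z \<alpha> \<le> (real j - 1) / K"
        proof -
          have "EE k Z \<alpha> \<le> (\<Sum>b\<in>{1..<k}. cr Z (U \<alpha> b) (U \<alpha> (Suc b)) * ((real j - 1) / K))"
            unfolding EE_def K_def[symmetric]
          proof (rule sum_mono)
            fix b assume b: "b \<in> {1..<k}"
            show "cr Z (U \<alpha> b) (U \<alpha> (Suc b)) * (real b / K) \<le> cr Z (U \<alpha> b) (U \<alpha> (Suc b)) * ((real j - 1) / K)"
            proof (cases "b < \<beta>")
              case True
              hence "real b \<le> real j - 1" using bj by linarith
              thus ?thesis using Kpos by (intro mult_left_mono) (auto simp: cr_nonneg divide_right_mono)
            next
              case False thus ?thesis using crz2[of b] b by simp
            qed
          qed
          also have "\<dots> = CC k Z \<alpha> * ((real j - 1) / K)" unfolding CC_def by (simp only: sum_distrib_right)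
          also have "\<dots> \<le> (real j - 1) / K" using Cle1[of \<alpha>] ai ab Kpos j1
            by (intro mult_left_le_one_le) (auto simp: CC_nn)
          finally show ?thesis .
        qed
        have aK: "\<alpha> \<in> {1..<k}" using ab ai ik' by auto
        have "SE = EE k Z \<alpha> + (\<Sum>a\<in>{1..<k} - {\<alpha>}. EE k Z a)"
          unfolding SE_def using aK by (intro sum.remove) auto
        also have "(\<Sum>a\<in>{1..<k} - {\<alpha>}. EE k Z a) \<le> (\<Sum>a\<in>{1..<k} - {\<alpha>}. g a)"
          by (rule sum_mono) (rule EEg, auto)
        also have "(\<Sum>a\<in>{1..<k} - {\<alpha>}. g a) = real i * real j / K - g \<alpha>"
          using sum.remove[of "{1..<k}" \<alpha> g] aK sumg by simp
        finally have "SE \<le> EE k Z \<alpha> + (real i * real j / K - real j / K)"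
          using ai unfolding g_def by simp
        hence "SE \<le> real i * real j / K - 1 / K" using Ea by (simp add: diff_divide_distrib)
        moreover have "1 / K > 0" using Kpos by simp
        ultimately have "SE < real i * real j / K" by linarith
        thus ?thesis using cost' SRj SCi by linarith
      qed
      show ?thesis using ge1 gt1 unfolding K_def by blast
    qed
  qed
qed

lemma sum_ind: "n < k \<Longrightarrow> (\<Sum>a\<in>{1..<k}. if a \<le> n then c else 0) = real n * (c::real)"
proof -
  assume nk: "n < k"
  have "(\<Sum>a\<in>{1..<k}. if a \<le> n then c else 0) = (\<Sum>a\<in>{a\<in>{1..<k}. a \<le> n}. c)"
    by (rule sum.inter_filter[symmetric]) simp
  also have "{a\<in>{1..<k}. a \<le> n} = {1..n}" using nk by auto
  finally show ?thesis by simp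
qed

lemma costW:
  fixes k i j :: nat and W :: "vtx set"
  assumes k3: "k \<ge> 3" and i1: "1 \<le> i" and ik: "i \<le> k - 1" and j1: "1 \<le> j" and jk: "j \<le> k - 1"
    and Wdef: "W = Sij i j \<union> {U \<alpha> \<beta> | \<alpha> \<beta>. 1 \<le> \<alpha> \<and> \<alpha> \<le> i \<and> 1 \<le> \<beta> \<and> \<beta> \<le> j}"
  shows "cut_cost k W = real i + real j - real i * real j / KK k"
proof -
  define K where "K = KK k"
  have k1: "k \<ge> 1" using k3 by simp
  have ik': "i < k" and jk': "j < k" using ik jk k1 by auto
  have UW: "U a b \<in> W \<longleftrightarrow> 1 \<le> a \<and> a \<le> i \<and> 1 \<le> b \<and> b \<le> j" for a b
    unfolding Wdef Sij_def by auto
  have VW: "Vt b \<in> W \<longleftrightarrow> 1 \<le> b \<and> b \<le> j" for b unfolding Wdef Sij_def by auto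
  have HW: "Ht a \<in> W \<longleftrightarrow> 1 \<le> a \<and> a \<le> i" for a unfolding Wdef Sij_def by auto
  have cost: "cut_cost k W = (\<Sum>b\<in>{1..<k}. RR k W b) + (\<Sum>a\<in>{1..<k}. CC k W a) - (\<Sum>a\<in>{1..<k}. EE k W a)"
    by (rule light[OF k1]) (use ik' jk' i1 j1 in \<open>auto simp: cr_def UW VW HW\<close>)
  have R: "RR k W b = (if b \<le> j then 1 else 0)" if b: "b \<in> {1..<k}" for b
  proof -
    have "RR k W b = (\<Sum>a\<in>{1..<k}. if a = i then (if b \<le> j then 1 else 0) else 0)"
      unfolding RR_def by (rule sum.cong) (use b in \<open>auto simp: cr_def UW\<close>)
    also have "\<dots> = (if b \<le> j then 1 else 0)" using i1 ik' by (simp add: sum.delta)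
    finally show ?thesis .
  qed
  have C: "CC k W a = (if a \<le> i then 1 else 0)" if a: "a \<in> {1..<k}" for a
  proof -
    have "CC k W a = (\<Sum>b\<in>{1..<k}. if b = j then (if a \<le> i then 1 else 0) else 0)"
      unfolding CC_def by (rule sum.cong) (use a in \<open>auto simp: cr_def UW\<close>)
    also have "\<dots> = (if a \<le> i then 1 else 0)" using j1 jk' by (simp add: sum.delta)
    finally show ?thesis .
  qed
  have E: "EE k W a = (if a \<le> i then real j / K else 0)" if a: "a \<in> {1..<k}" for a
  proof -
    have "EE k W a = (\<Sum>b\<in>{1..<k}. if b = j then (if a \<le> i then real j / K else 0) else 0)"
      unfolding EE_def K_def by (rule sum.cong) (use a in \<open>auto simp: cr_def UW\<close>)
    also have "\<dots> = (if a \<le> i then real j / K else 0)" using j1 jk' by (simp add: sum.delta)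
    finally show ?thesis .
  qed
  have "(\<Sum>b\<in>{1..<k}. RR k W b) = real j"
    using sum.cong[OF refl R, of "{1..<k}"] sum_ind[OF jk', of 1] by simp
  moreover have "(\<Sum>a\<in>{1..<k}. CC k W a) = real i"
    using sum.cong[OF refl C, of "{1..<k}"] sum_ind[OF ik', of 1] by simp
  moreover have "(\<Sum>a\<in>{1..<k}. EE k W a) = real i * (real j / K)"
    using sum.cong[OF refl E, of "{1..<k}"] sum_ind[OF ik', of "real j / K"] by simp
  ultimately show ?thesis unfolding cost K_def by simp
qed

lemma edges_verts: "(a, b) \<in> edges k \<Longrightarrow> a \<in> verts k \<and> b \<in> verts k"
  unfolding edges_def verts_def by auto

lemma cut_compl: "cut_cost k (verts k - Z) = cut_cost k Z"
proof -
  have "{(a, b) \<in> edges k. (a \<in> verts k - Z) \<noteq> (b \<in> verts k - Z)} = {(a, b) \<in> edges k. (a \<in> Z) \<noteq> (b \<in> Z)}"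
    using edges_verts by blast
  thus ?thesis unfolding cut_cost_def by simp
qed

theorem lemma3p7:
  fixes k i j :: nat
  assumes "k \<ge> 3" and "1 \<le> i" "i \<le> k - 1" and "1 \<le> j" "j \<le> k - 1"
  defines "W \<equiv> Sij i j \<union> {U \<alpha> \<beta> | \<alpha> \<beta>. 1 \<le> \<alpha> \<and> \<alpha> \<le> i \<and> 1 \<le> \<beta> \<and> \<beta> \<le> j}"
  shows "separating k (Sij i j) W
    \<and> (\<forall>W'. separating k (Sij i j) W' \<and> W' \<noteq> W \<and> W' \<noteq> verts k - W
             \<longrightarrow> cut_cost k W' > cut_cost k W)
    \<and> cut_cost k W = real i + real j - (\<Sum>\<alpha> = 1..i. eps k \<alpha> j)"
proof -
  have Wd: "W = Sij i j \<union> {U \<alpha> \<beta> | \<alpha> \<beta>. 1 \<le> \<alpha> \<and> \<alpha> \<le> i \<and> 1 \<le> \<beta> \<and> \<beta> \<le> j}" unfolding W_def ..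
  have ik': "i < k" and jk': "j < k" using assms(1,3,5) by auto
  have St: "Sij i j \<subseteq> terminals k" unfolding Sij_def terminals_def using ik' jk' by auto
  have Bt: "{U \<alpha> \<beta> | \<alpha> \<beta>. 1 \<le> \<alpha> \<and> \<alpha> \<le> i \<and> 1 \<le> \<beta> \<and> \<beta> \<le> j} \<inter> terminals k = {}"
    unfolding terminals_def by auto
  have WT: "W \<inter> terminals k = Sij i j" unfolding Wd using St Bt by blast
  have Tv: "terminals k \<subseteq> verts k" unfolding terminals_def verts_def by auto
  have Bv: "{U \<alpha> \<beta> | \<alpha> \<beta>. 1 \<le> \<alpha> \<and> \<alpha> \<le> i \<and> 1 \<le> \<beta> \<and> \<beta> \<le> j} \<subseteq> verts k"
    unfolding verts_def using ik' jk' by auto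
  have Wv: "W \<subseteq> verts k" unfolding Wd using St Tv Bv by blast
  have cW: "cut_cost k W = real i + real j - real i * real j / KK k"
    by (rule costW[OF assms(1-5) Wd])
  have epsum: "(\<Sum>\<alpha> = 1..i. eps k \<alpha> j) = real i * real j / KK k"
    unfolding eps_def KK_def by simp
  have sep: "separating k (Sij i j) W" unfolding separating_def using Wv WT by blast
  have uniq: "cut_cost k W' > cut_cost k W"
    if h: "separating k (Sij i j) W'" "W' \<noteq> W" "W' \<noteq> verts k - W" for W'
  proof -
    have W'v: "W' \<subseteq> verts k" using h(1) unfolding separating_def by blast
    show ?thesis
    proof (cases "W' \<inter> terminals k = Sij i j")
      case True
      show ?thesis using main[OF assms(1-5) Wd W'v True] h(2) cW by auto
    next
      case False
      hence T2: "W' \<inter> terminals k = terminals k - Sij i j" using h(1) unfolding separating_def by blast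
      let ?Z = "verts k - W'"
      have Zv: "?Z \<subseteq> verts k" by blast
      have Zt: "?Z \<inter> terminals k = Sij i j" using T2 Tv St by blast
      have ZW: "?Z \<noteq> W" using h(3) W'v Wv by blast
      have "cut_cost k ?Z > real i + real j - real i * real j / KK k"
        using main[OF assms(1-5) Wd Zv Zt] ZW by auto
      thus ?thesis using cut_compl[of k W'] cW by simp
    qed
  qed
  show ?thesis using sep uniq cW epsum by auto
qed

end
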